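(* Let $p=p(n)$ and $G\in\mathcal G(n,p)$. If $p=o(n^{-3/2})$, then with high probability $G$ is reconstructible from its $1$-neighbourhoods.
   Context: $\mathcal G(n,p)$ is the Erdős–Rényi random graph on vertex set $[n]$ in which each pair is an edge independently with probability $p$. "With high probability" means with probability tending to $1$ as $n\to\infty$. For a graph $G$, a vertex $v$ and an integer $r\ge1$, the $r$-neighbourhood $N_r^{(G)}(v)$ is the subgraph of $G$ induced by the vertices at distance at most $r$ from $v$, considered as a graph rooted at $v$. Graphs $G$ and $H$ have isomorphic $r$-neighbourhoods if there is a bijection $\phi:V(G)\to V(H)$ such that for every $v\in V(G)$ there is a graph isomorphism $N_r^{(G)}(v)\to N_r^{(H)}(\phi(v))$ mapping $v$ to $\phi(v)$. $G$ is reconstructible from its $r$-neighbourhoods if every graph $H$ with $r$-neighbourhoods isomorphic to those of $G$ is isomorphic to $G$. *)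

theory Defs
  imports Complex_Main "HOL-Library.Landau_Symbols"
begin

text \<open>Simple graphs on the vertex set [n] = {0..<n}, given by their edge sets
  (edges are 2-element sets {u,v} with u \<noteq> v).\<close>

definition vpairs :: "nat \<Rightarrow> nat set set" where
  "vpairs n = {e. \<exists>u v. u < n \<and> v < n \<and> u \<noteq> v \<and> e = {u, v}}"

definition closed_nbhd :: "nat set set \<Rightarrow> nat \<Rightarrow> nat set" where
  "closed_nbhd E v = insert v {u. {u, v} \<in> E}"

definition rooted_induced_iso ::
  "nat set set \<Rightarrow> nat set \<Rightarrow> nat \<Rightarrow> nat set set \<Rightarrow> nat set \<Rightarrow> nat \<Rightarrow> bool" where
  "rooted_induced_iso E A a F B b \<longleftrightarrow>
     (\<exists>f. bij_betw f A B \<and> f a = b \<and>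
          (\<forall>x\<in>A. \<forall>y\<in>A. {x, y} \<in> E \<longleftrightarrow> {f x, f y} \<in> F))"

definition nbhd1_iso :: "nat set set \<Rightarrow> nat \<Rightarrow> nat set set \<Rightarrow> nat \<Rightarrow> bool" where
  "nbhd1_iso E v H w = rooted_induced_iso E (closed_nbhd E v) v H (closed_nbhd H w) w"

definition graph_iso :: "nat \<Rightarrow> nat set set \<Rightarrow> nat set set \<Rightarrow> bool" where
  "graph_iso n E H \<longleftrightarrow>
     (\<exists>f. bij_betw f {..<n} {..<n} \<and>
          (\<forall>x<n. \<forall>y<n. {x, y} \<in> E \<longleftrightarrow> {f x, f y} \<in> H))"

definition same_1nbhds :: "nat \<Rightarrow> nat set set \<Rightarrow> nat set set \<Rightarrow> bool" where
  "same_1nbhds n E H \<longleftrightarrow>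
     (\<exists>\<phi>. bij_betw \<phi> {..<n} {..<n} \<and> (\<forall>v<n. nbhd1_iso E v H (\<phi> v)))"

definition reconstructible_1 :: "nat \<Rightarrow> nat set set \<Rightarrow> bool" where
  "reconstructible_1 n E \<longleftrightarrow>
     (\<forall>H. H \<subseteq> vpairs n \<longrightarrow> same_1nbhds n E H \<longrightarrow> graph_iso n E H)"

definition gnp_prob :: "nat \<Rightarrow> real \<Rightarrow> (nat set set \<Rightarrow> bool) \<Rightarrow> real" where
  "gnp_prob n p P =
     (\<Sum>E \<in> {E. E \<subseteq> vpairs n \<and> P E}. p ^ card E * (1 - p) ^ (card (vpairs n) - card E))"

end

theory Submission
  imports Defs
begin


lemma total_pow:
  fixes q :: real
  assumes "finite S"
  shows "(\<Sum>E\<in>Pow S. q^card E * (1-q)^(card S - card E)) = 1"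
  using assms
proof (induction S rule: finite_induct)
  case empty
  then show ?case by simp
next
  case (insert x S)
  let ?T = "\<Sum>E\<in>Pow S. q^card E * (1-q)^(card S - card E)"
  have d: "Pow S \<inter> insert x ` Pow S = {}" using insert by auto
  have inj: "inj_on (insert x) (Pow S)" using insert unfolding inj_on_def by (metis PowD insert_ident subset_iff)
  have s1: "(\<Sum>E\<in>Pow S. q^card E * (1-q)^(card (insert x S) - card E)) = (1-q) * ?T"
    unfolding sum_distrib_left
  proof (rule sum.cong)
    fix E assume "E \<in> Pow S"
    hence "card E \<le> card S" using insert by (simp add: card_mono)
    hence "card (insert x S) - card E = Suc (card S - card E)" using insert by simp
    thus "q^card E * (1-q)^(card (insert x S) - card E) = (1-q) * (q^card E * (1-q)^(card S - card E))"
      by simp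
  qed simp
  have s2: "(\<Sum>E\<in>insert x ` Pow S. q^card E * (1-q)^(card (insert x S) - card E)) = q * ?T"
    unfolding sum.reindex[OF inj] sum_distrib_left
  proof (rule sum.cong)
    fix E assume E: "E \<in> Pow S"
    hence fE: "finite E" "x \<notin> E" using insert finite_subset by auto
    thus "((\<lambda>E. q^card E * (1-q)^(card (insert x S) - card E)) \<circ> insert x) E = q * (q^card E * (1-q)^(card S - card E))"
      using insert by simp
  qed simp
  show ?case
    unfolding Pow_insert sum.union_disjoint[OF finite_Pow_iff[THEN iffD2, OF insert(1)] finite_imageI[OF finite_Pow_iff[THEN iffD2, OF insert(1)]] d]
    using s1 s2 insert by (simp add: algebra_simps)
qed

lemma sup_pow:
  fixes q :: real
  assumes "finite S" "A \<subseteq> S"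
  shows "(\<Sum>E\<in>{E. E \<subseteq> S \<and> A \<subseteq> E}. q^card E * (1-q)^(card S - card E)) = q^card A"
proof -
  have eq: "{E. E \<subseteq> S \<and> A \<subseteq> E} = (\<lambda>E'. A \<union> E') ` Pow (S - A)" 
  proof
    show "{E. E \<subseteq> S \<and> A \<subseteq> E} \<subseteq> (\<lambda>E'. A \<union> E') ` Pow (S - A)"
    proof
      fix E assume "E \<in> {E. E \<subseteq> S \<and> A \<subseteq> E}"
      hence "E = A \<union> (E - A)" "E - A \<in> Pow (S - A)" by auto
      thus "E \<in> (\<lambda>E'. A \<union> E') ` Pow (S - A)" by blast
    qed
  qed (use assms in auto)
  have inj: "inj_on (\<lambda>E'. A \<union> E') (Pow (S - A))"
    unfolding inj_on_def by blast
  have fA: "finite A" using assms finite_subset by blast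
  have cS: "card (S - A) = card S - card A" using assms fA by (simp add: card_Diff_subset)
  have "(\<Sum>E\<in>{E. E \<subseteq> S \<and> A \<subseteq> E}. q^card E * (1-q)^(card S - card E))
      = (\<Sum>E'\<in>Pow (S-A). q^card A * (q^card E' * (1-q)^(card (S-A) - card E')))"
    unfolding eq sum.reindex[OF inj]
  proof (rule sum.cong)
    fix E' assume E': "E' \<in> Pow (S - A)"
    hence fE: "finite E'" "A \<inter> E' = {}" using assms finite_subset[of E' S] by auto
    have c: "card (A \<union> E') = card A + card E'" using fE fA card_Un_disjoint by blast
    have "card E' \<le> card (S - A)" using E' assms by (simp add: card_mono)
    hence "card S - card (A \<union> E') = card (S-A) - card E'" using c cS by simp
    thus "((\<lambda>E. q^card E * (1-q)^(card S - card E)) \<circ> (\<union>) A) E' = q^card A * (q^card E' * (1-q)^(card (S-A) - card E'))"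
      using c by (simp add: power_add)
  qed simp
  also have "\<dots> = q^card A" unfolding sum_distrib_left[symmetric]
    using total_pow[of "S - A" q] assms by simp
  finally show ?thesis .
qed



definition mt :: "nat set set \<Rightarrow> bool" where
  "mt E \<longleftrightarrow> (\<forall>e1\<in>E. \<forall>e2\<in>E. e1 \<noteq> e2 \<longrightarrow> e1 \<inter> e2 = {})"

definition isol :: "nat set set \<Rightarrow> nat \<Rightarrow> bool" where
  "isol E x \<longleftrightarrow> (\<forall>e\<in>E. x \<notin> e)"

definition sw :: "nat \<Rightarrow> nat \<Rightarrow> nat \<Rightarrow> nat" where
  "sw a b x = (if x = a then b else if x = b then a else x)"

lemma vpairsE: "e \<in> vpairs n \<Longrightarrow> (\<And>u v. u < n \<Longrightarrow> v < n \<Longrightarrow> u \<noteq> v \<Longrightarrow> e = {u,v} \<Longrightarrow> P) \<Longrightarrow> P"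
  unfolding vpairs_def by blast

lemma finite_vpairs: "finite (vpairs n)"
proof -
  have "vpairs n \<subseteq> Pow {..<n}" unfolding vpairs_def by auto
  thus ?thesis by (rule finite_subset) simp
qed

lemma sw_bij: "a < n \<Longrightarrow> b < n \<Longrightarrow> bij_betw (sw a b) {..<n} {..<n}"
  by (rule bij_betw_byWitness[where f'="sw a b"]) (auto simp: sw_def)

lemma isolD: "isol H a \<Longrightarrow> e \<in> H \<Longrightarrow> a \<notin> e"
  unfolding isol_def by blast

lemma sw_fix: "x \<noteq> a \<Longrightarrow> x \<noteq> b \<Longrightarrow> sw a b x = x"
  unfolding sw_def by simp

lemma sw_notab: "sw a b x \<noteq> a \<Longrightarrow> sw a b x \<noteq> b \<Longrightarrow> sw a b x = x"
  unfolding sw_def by (auto split: if_splits)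

lemma sw_auto:
  assumes A: "isol H a" "isol H b"
  shows "{sw a b z, sw a b w} \<in> H \<longleftrightarrow> {z,w} \<in> H"
proof
  assume z: "{sw a b z, sw a b w} \<in> H"
  have m: "sw a b z \<in> {sw a b z, sw a b w}" "sw a b w \<in> {sw a b z, sw a b w}" by simp_all
  have "sw a b z = z" "sw a b w = w"
    using sw_notab isolD[OF A(1) z] isolD[OF A(2) z] m by metis+
  thus "{z,w} \<in> H" using z by simp
next
  assume z: "{z,w} \<in> H"
  have m: "z \<in> {z,w}" "w \<in> {z,w}" by simp_all
  have "sw a b z = z" "sw a b w = w"
    using sw_fix isolD[OF A(1) z] isolD[OF A(2) z] m by metis+
  thus "{sw a b z, sw a b w} \<in> H" using z by simp
qed

lemma isol_transfer:
  assumes f: "bij_betw f {..<n} {..<n}" and iso: "\<forall>x<n. \<forall>y<n. {x, y} \<in> E \<longleftrightarrow> {f x, f y} \<in> H"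
    and H: "H \<subseteq> vpairs n" and x: "x < n" and ix: "isol E x"
  shows "isol H (f x)"
  unfolding isol_def
proof (intro ballI notI)
  fix e assume e: "e \<in> H" "f x \<in> e"
  have "e \<in> vpairs n" using H e(1) by (rule subsetD)
  then obtain u v where uv: "u < n" "v < n" "e = {u,v}" by (rule vpairsE)
  have "\<exists>w. w < n \<and> e = {f x, w}"
  proof (cases "f x = u")
    case True thus ?thesis using uv by blast
  next
    case False hence "f x = v" using e(2) uv(3) by simp
    thus ?thesis using uv by (metis insert_commute)
  qed
  then obtain w where w: "w < n" "e = {f x, w}" by blast
  have "w \<in> f ` {..<n}" using f w(1) unfolding bij_betw_def by simp
  then obtain z where z: "z < n" "w = f z" by auto
  have "{f x, f z} \<in> H" using e(1) w(2) z(2) by simp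
  hence "{x,z} \<in> E" using iso x z(1) by blast
  thus False using ix unfolding isol_def by blast
qed

lemma doubleton_inj:
  assumes "inj_on g A" "x \<in> A" "y \<in> A" "a \<in> A" "b \<in> A" "{g x, g y} = {g a, g b}"
  shows "{x,y} = {a,b}"
proof -
  have "(g x = g a \<and> g y = g b) \<or> (g x = g b \<and> g y = g a)" using assms(6) unfolding doubleton_eq_iff by blast
  hence "(x = a \<and> y = b) \<or> (x = b \<and> y = a)" using assms(1-5) unfolding inj_on_def by blast
  thus ?thesis by blast
qed

lemma mt_isol:
  assumes m: "mt E" and ab: "{a,b} \<in> E"
  shows "isol (E - {{a,b}}) a \<and> isol (E - {{a,b}}) b"
  unfolding isol_def
proof (intro conjI ballI)
  fix e assume e: "e \<in> E - {{a,b}}"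
  hence "e \<in> E" "e \<noteq> {a,b}" by auto
  hence "e \<inter> {a,b} = {}" using m ab unfolding mt_def by simp
  thus "a \<notin> e" "b \<notin> e" by auto
qed

lemma iso_match:
  "E \<subseteq> vpairs n \<Longrightarrow> H \<subseteq> vpairs n \<Longrightarrow> mt E \<Longrightarrow> mt H \<Longrightarrow> card E = card H \<Longrightarrow> graph_iso n E H"
proof (induction "card E" arbitrary: E H)
  case 0
  have "finite E" "finite H" using 0(2,3) finite_vpairs finite_subset by blast+
  hence "E = {}" "H = {}" using 0 by auto
  then show ?case unfolding graph_iso_def by (intro exI[of _ id]) auto
next
  case (Suc k)
  have fin: "finite E" "finite H" using Suc.prems(1,2) finite_vpairs finite_subset by blast+
  have "E \<noteq> {}" using Suc.hyps(2) by auto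
  then obtain e where e: "e \<in> E" by blast
  have "e \<in> vpairs n" using Suc.prems(1) e by (rule subsetD)
  then obtain a b where ab: "a < n" "b < n" "a \<noteq> b" "e = {a,b}" by (rule vpairsE)
  have "H \<noteq> {}" using Suc.hyps(2) Suc.prems(5) by auto
  then obtain h where h: "h \<in> H" by blast
  have "h \<in> vpairs n" using Suc.prems(2) h by (rule subsetD)
  then obtain c d where cd: "c < n" "d < n" "c \<noteq> d" "h = {c,d}" by (rule vpairsE)
  define E' where "E' = E - {{a,b}}"
  define H' where "H' = H - {{c,d}}"
  have E'p: "E' \<subseteq> vpairs n" "mt E'" "k = card E'"
  proof -
    show "E' \<subseteq> vpairs n" using Suc.prems(1) unfolding E'_def by blast
    show "mt E'" using Suc.prems(3) unfolding E'_def mt_def by blast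
    show "k = card E'" using Suc.hyps(2) fin(1) e ab unfolding E'_def by (simp add: card_Diff_singleton)
  qed
  have H'p: "H' \<subseteq> vpairs n" "mt H'"
  proof -
    show "H' \<subseteq> vpairs n" using Suc.prems(2) unfolding H'_def by blast
    show "mt H'" using Suc.prems(4) unfolding H'_def mt_def by blast
  qed
  have cH': "card E' = card H'" using Suc.hyps(2) Suc.prems(5) fin(2) h cd E'p(3) unfolding H'_def by (simp add: card_Diff_singleton)
  obtain f where f: "bij_betw f {..<n} {..<n}" and fi: "\<forall>x<n. \<forall>y<n. {x, y} \<in> E' \<longleftrightarrow> {f x, f y} \<in> H'"
    using Suc.hyps(1)[OF E'p(3) E'p(1) H'p(1) E'p(2) H'p(2) cH'] unfolding graph_iso_def by blast
  have iE: "isol E' a" "isol E' b" using mt_isol[OF Suc.prems(3)] e ab unfolding E'_def by blast+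
  have iH: "isol H' c" "isol H' d" using mt_isol[OF Suc.prems(4)] h cd unfolding H'_def by blast+
  have ifa: "isol H' (f a)" "isol H' (f b)"
    using isol_transfer[OF f fi H'p(1)] iE ab by auto
  have fn: "f a < n" "f b < n" using f ab unfolding bij_betw_def by auto
  have fab: "f a \<noteq> f b" using f ab unfolding bij_betw_def inj_on_def by auto
  define s1 where "s1 = sw (f a) c"
  define b' where "b' = s1 (f b)"
  define s2 where "s2 = sw b' d"
  define g where "g = s2 \<circ> s1 \<circ> f"
  have b'eq: "b' = (if f b = c then f a else f b)" using fab unfolding b'_def s1_def sw_def by simp
  have b'p: "b' < n" "isol H' b'" "b' \<noteq> c"
    using fn ifa fab b'eq by (simp_all split: if_splits)
  have ga: "g a = c" using b'p cd unfolding g_def s2_def s1_def sw_def by simp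
  have gb: "g b = d" unfolding g_def s2_def b'_def sw_def by simp
  have gbij: "bij_betw g {..<n} {..<n}" unfolding g_def s2_def s1_def
    unfolding comp_assoc by (rule bij_betw_trans[OF bij_betw_trans[OF f sw_bij[OF fn(1) cd(1)]] sw_bij[OF b'p(1) cd(2)]])
  have gi: "\<forall>x<n. \<forall>y<n. {x, y} \<in> E' \<longleftrightarrow> {g x, g y} \<in> H'"
    unfolding g_def s2_def s1_def using fi sw_auto[OF ifa(1) iH(1)] sw_auto[OF b'p(2) iH(2)] by (simp only: comp_apply)
  have ginj: "inj_on g {..<n}" using gbij bij_betw_def by blast
  show ?case unfolding graph_iso_def
  proof (intro exI conjI allI impI)
    fix x y assume xy: "x < n" "y < n"
    have "{x,y} \<in> E \<longleftrightarrow> {x,y} = {a,b} \<or> {x,y} \<in> E'" using e ab unfolding E'_def by auto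
    moreover have "{g x, g y} \<in> H \<longleftrightarrow> {g x, g y} = {c,d} \<or> {g x, g y} \<in> H'" using h cd unfolding H'_def by auto
    moreover have "{x,y} = {a,b} \<longleftrightarrow> {g x, g y} = {c,d}"
    proof
      assume "{x,y} = {a,b}" thus "{g x, g y} = {c,d}" using ga gb unfolding doubleton_eq_iff by auto
    next
      assume "{g x, g y} = {c,d}"
      hence "{g x, g y} = {g a, g b}" using ga gb by simp
      thus "{x,y} = {a,b}" using doubleton_inj[OF ginj, of x y a b] xy ab by simp
    qed
    ultimately show "{x,y} \<in> E \<longleftrightarrow> {g x, g y} \<in> H" using gi xy by blast
  qed (rule gbij)
qed


lemma cn_sub: "E \<subseteq> vpairs n \<Longrightarrow> closed_nbhd E v \<subseteq> insert v {..<n}"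
proof
  fix x assume E: "E \<subseteq> vpairs n" and x: "x \<in> closed_nbhd E v"
  show "x \<in> insert v {..<n}"
  proof (cases "x = v")
    case False
    hence "{x,v} \<in> E" using x unfolding closed_nbhd_def by simp
    hence "{x,v} \<in> vpairs n" using E by blast
    then obtain a b where ab: "a < n" "b < n" "{x,v} = {a,b}" by (rule vpairsE)
    have "x \<in> {a,b}" using ab(3) by blast
    thus ?thesis using ab by auto
  qed simp
qed

lemma cn_fin: "E \<subseteq> vpairs n \<Longrightarrow> finite (closed_nbhd E v)"
  by (rule finite_subset[OF cn_sub]) simp_all

lemma cn_mem: "v \<in> closed_nbhd E v"
  unfolding closed_nbhd_def by simp

lemma cn_card_iso: "nbhd1_iso E v H w \<Longrightarrow> card (closed_nbhd E v) = card (closed_nbhd H w)"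
  unfolding nbhd1_iso_def rooted_induced_iso_def using bij_betw_same_card by blast

lemma union_char:
  assumes E: "E \<subseteq> vpairs n"
  shows "v \<in> \<Union>E \<longleftrightarrow> card (closed_nbhd E v) \<noteq> 1"
proof -
  have "v \<in> \<Union>E \<longleftrightarrow> closed_nbhd E v \<noteq> {v}"
  proof
    assume "v \<in> \<Union>E"
    then obtain e where e: "e \<in> E" "v \<in> e" by blast
    have "e \<in> vpairs n" using E e(1) by (rule subsetD)
    then obtain x y where xy: "x \<noteq> y" "e = {x,y}" by (rule vpairsE)
    have "\<exists>u. u \<noteq> v \<and> {u,v} \<in> E"
    proof (cases "v = x")
      case True
      have "{y,v} = e" using True xy(2) by (simp add: insert_commute)
      thus ?thesis using True xy(1) e(1) by auto
    next
      case False hence "v = y" using xy e by blast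
      thus ?thesis using xy e False by auto
    qed
    then obtain u where "u \<noteq> v" "{u,v} \<in> E" by blast
    hence "u \<in> closed_nbhd E v" unfolding closed_nbhd_def by simp
    thus "closed_nbhd E v \<noteq> {v}" using \<open>u \<noteq> v\<close> by blast
  next
    assume "closed_nbhd E v \<noteq> {v}"
    then obtain u where "u \<in> closed_nbhd E v" "u \<noteq> v" using cn_mem by blast
    hence "{u,v} \<in> E" unfolding closed_nbhd_def by simp
    thus "v \<in> \<Union>E" by blast
  qed
  also have "\<dots> \<longleftrightarrow> card (closed_nbhd E v) \<noteq> 1"
  proof
    assume "closed_nbhd E v \<noteq> {v}"
    then obtain u where "u \<in> closed_nbhd E v" "u \<noteq> v" using cn_mem[of v E] by blast
    hence "{u,v} \<subseteq> closed_nbhd E v" using cn_mem[of v E] by blast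
    hence "card {u,v} \<le> card (closed_nbhd E v)" using cn_fin[OF E] card_mono by blast
    thus "card (closed_nbhd E v) \<noteq> 1" using \<open>u \<noteq> v\<close> by simp
  next
    assume "card (closed_nbhd E v) \<noteq> 1"
    thus "closed_nbhd E v \<noteq> {v}" by auto
  qed
  finally show ?thesis .
qed

lemma mt_le2:
  assumes E: "E \<subseteq> vpairs n" and m: "mt E"
  shows "card (closed_nbhd E v) \<le> 2"
proof -
  let ?X = "{u. {u,v} \<in> E}"
  have fX: "finite ?X" using cn_fin[OF E, of v] unfolding closed_nbhd_def by simp
  have "\<forall>x\<in>?X. \<forall>y\<in>?X. x = y"
  proof (intro ballI)
    fix x y assume x: "x \<in> ?X" and y: "y \<in> ?X"
    show "x = y"
    proof (rule ccontr)
      assume "x \<noteq> y"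
      hence "{x,v} \<noteq> {y,v}" by (auto simp: doubleton_eq_iff)
      hence "{x,v} \<inter> {y,v} = {}" using m x y unfolding mt_def by simp
      thus False by blast
    qed
  qed
  hence "card ?X \<le> 1" using card_le_Suc0_iff_eq[OF fX] by simp
  moreover have "card (closed_nbhd E v) \<le> Suc (card ?X)"
    unfolding closed_nbhd_def by (rule card_insert_le_m1) (simp_all add: fX)
  ultimately show ?thesis by simp
qed

lemma le2_mt:
  assumes H: "H \<subseteq> vpairs n" and c: "\<forall>w<n. card (closed_nbhd H w) \<le> 2"
  shows "mt H"
  unfolding mt_def
proof (intro ballI impI)
  fix e1 e2 assume e: "e1 \<in> H" "e2 \<in> H" "e1 \<noteq> e2"
  show "e1 \<inter> e2 = {}"
  proof (rule ccontr)
    assume "e1 \<inter> e2 \<noteq> {}"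
    then obtain x where x: "x \<in> e1" "x \<in> e2" by blast
    have "e1 \<in> vpairs n" using H e(1) by (rule subsetD)
    then obtain a1 b1 where 1: "a1 < n" "b1 < n" "a1 \<noteq> b1" "e1 = {a1,b1}" by (rule vpairsE)
    have "e2 \<in> vpairs n" using H e(2) by (rule subsetD)
    then obtain a2 b2 where 2: "a2 < n" "b2 < n" "a2 \<noteq> b2" "e2 = {a2,b2}" by (rule vpairsE)
    obtain y where y: "y \<noteq> x" "e1 = {y,x}" using 1 x(1) by (metis insert_commute insertE singletonD)
    obtain z where z: "z \<noteq> x" "e2 = {z,x}" using 2 x(2) by (metis insert_commute insertE singletonD)
    have yz: "y \<noteq> z" using y z e(3) by blast
    have xn: "x < n" using 1 x(1) by blast
    have sub: "{x,y,z} \<subseteq> closed_nbhd H x" using y z e unfolding closed_nbhd_def by auto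
    have "card {x,y,z} = 3" using y z yz by simp
    hence "3 \<le> card (closed_nbhd H x)" using sub card_mono[OF cn_fin[OF H]] by metis
    thus False using c xn by fastforce
  qed
qed

lemma card_union:
  assumes E: "E \<subseteq> vpairs n" and m: "mt E"
  shows "card (\<Union>E) = 2 * card E"
proof -
  have "card (\<Union>E) = sum card E"
  proof (rule card_Union_disjoint)
    show "pairwise disjnt E" using m unfolding mt_def pairwise_def disjnt_def by blast
    fix A assume "A \<in> E" thus "finite A" using E unfolding vpairs_def by auto
  qed
  also have "\<dots> = sum (\<lambda>_. 2) E"
  proof (rule sum.cong)
    fix e assume "e \<in> E"
    hence "e \<in> vpairs n" using E by blast
    then obtain u v where "u \<noteq> v" "e = {u,v}" by (rule vpairsE)
    thus "card e = 2" by simp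
  qed simp
  finally show ?thesis by simp
qed

lemma union_sub: "E \<subseteq> vpairs n \<Longrightarrow> \<Union>E \<subseteq> {..<n}"
  unfolding vpairs_def by auto

lemma recon:
  assumes E: "E \<subseteq> vpairs n" and m: "mt E"
  shows "reconstructible_1 n E"
  unfolding reconstructible_1_def
proof (intro allI impI)
  fix H assume H: "H \<subseteq> vpairs n" and s: "same_1nbhds n E H"
  then obtain \<phi> where phi: "bij_betw \<phi> {..<n} {..<n}" and iso: "\<forall>v<n. nbhd1_iso E v H (\<phi> v)"
    unfolding same_1nbhds_def by blast
  have cc: "\<And>v. v < n \<Longrightarrow> card (closed_nbhd H (\<phi> v)) = card (closed_nbhd E v)"
    using cn_card_iso[OF iso[rule_format]] by simp
  have mH: "mt H"
  proof (rule le2_mt[OF H], intro allI impI)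
    fix w assume "w < n"
    hence "w \<in> \<phi> ` {..<n}" using phi unfolding bij_betw_def by simp
    then obtain v where v: "v < n" "w = \<phi> v" by auto
    show "card (closed_nbhd H w) \<le> 2" using cc[OF v(1)] v mt_le2[OF E m] by simp
  qed
  have UE: "\<Union>E = {v\<in>{..<n}. card (closed_nbhd E v) \<noteq> 1}"
  proof (intro set_eqI iffI)
    fix x assume "x \<in> \<Union>E" thus "x \<in> {v\<in>{..<n}. card (closed_nbhd E v) \<noteq> 1}"
      using union_char[OF E, of x] union_sub[OF E] by auto
  next
    fix x assume "x \<in> {v\<in>{..<n}. card (closed_nbhd E v) \<noteq> 1}" thus "x \<in> \<Union>E"
      using union_char[OF E, of x] by simp
  qed
  have UH: "\<Union>H = {v\<in>{..<n}. card (closed_nbhd H v) \<noteq> 1}"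
  proof (intro set_eqI iffI)
    fix x assume "x \<in> \<Union>H" thus "x \<in> {v\<in>{..<n}. card (closed_nbhd H v) \<noteq> 1}"
      using union_char[OF H, of x] union_sub[OF H] by auto
  next
    fix x assume "x \<in> {v\<in>{..<n}. card (closed_nbhd H v) \<noteq> 1}" thus "x \<in> \<Union>H"
      using union_char[OF H, of x] by simp
  qed
  have img: "\<phi> ` (\<Union>E) = \<Union>H"
  proof
    show "\<phi> ` (\<Union>E) \<subseteq> \<Union>H"
    proof
      fix w assume "w \<in> \<phi> ` (\<Union>E)"
      then obtain v where v: "v \<in> \<Union>E" "w = \<phi> v" by blast
      hence v2: "v < n" "card (closed_nbhd E v) \<noteq> 1" unfolding UE by auto
      have "w < n" using phi v2(1) v(2) unfolding bij_betw_def by auto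
      thus "w \<in> \<Union>H" unfolding UH using cc[OF v2(1)] v2(2) v(2) by simp
    qed
    show "\<Union>H \<subseteq> \<phi> ` (\<Union>E)"
    proof
      fix w assume "w \<in> \<Union>H"
      hence w: "w < n" "card (closed_nbhd H w) \<noteq> 1" unfolding UH by auto
      hence "w \<in> \<phi> ` {..<n}" using phi unfolding bij_betw_def by simp
    then obtain v where v: "v < n" "w = \<phi> v" by auto
      have "v \<in> \<Union>E" unfolding UE using cc[OF v(1)] w v by simp
      thus "w \<in> \<phi> ` (\<Union>E)" using v(2) by blast
    qed
  qed
  have "inj_on \<phi> (\<Union>E)" using phi union_sub[OF E] unfolding bij_betw_def using inj_on_subset by blast
  hence "card (\<Union>H) = card (\<Union>E)" using img card_image by fastforce
  hence "card E = card H" using card_union[OF E m] card_union[OF H mH] by simp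
  thus "graph_iso n E H" using iso_match[OF E H m mH] by blast
qed



lemma gnp_split:
  fixes q :: real
  shows "gnp_prob n q P + gnp_prob n q (\<lambda>E. \<not> P E) = 1"
proof -
  have fin: "finite (Pow (vpairs n))" using finite_vpairs by simp
  have eq: "Pow (vpairs n) = {E. E \<subseteq> vpairs n \<and> P E} \<union> {E. E \<subseteq> vpairs n \<and> \<not> P E}" by auto
  have "gnp_prob n q P + gnp_prob n q (\<lambda>E. \<not> P E)
     = (\<Sum>E\<in>Pow (vpairs n). q ^ card E * (1 - q) ^ (card (vpairs n) - card E))"
    unfolding gnp_prob_def eq
    by (rule sum.union_disjoint[symmetric]) (use fin eq in auto)
  also have "\<dots> = 1" by (rule total_pow[OF finite_vpairs])
  finally show ?thesis .
qed

lemma gnp_nonneg: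
  fixes q :: real
  assumes "0 \<le> q" "q \<le> 1"
  shows "0 \<le> gnp_prob n q P"
  unfolding gnp_prob_def using assms by (intro sum_nonneg) simp

lemma gnp_mono:
  fixes q :: real
  assumes "0 \<le> q" "q \<le> 1" and PQ: "\<And>E. E \<subseteq> vpairs n \<Longrightarrow> P E \<Longrightarrow> Q E"
  shows "gnp_prob n q P \<le> gnp_prob n q Q"
  unfolding gnp_prob_def
proof (rule sum_mono2)
  show "finite {E. E \<subseteq> vpairs n \<and> Q E}" using finite_vpairs by (rule rev_finite_subset[OF finite_Pow_iff[THEN iffD2]]) auto
  show "{E. E \<subseteq> vpairs n \<and> P E} \<subseteq> {E. E \<subseteq> vpairs n \<and> Q E}" using PQ by auto
qed (use assms in simp)

lemma not_mt_witness:
  assumes E: "E \<subseteq> vpairs n" and nm: "\<not> mt E"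
  shows "\<exists>x y z. x < n \<and> y < n \<and> z < n \<and> x \<noteq> y \<and> x \<noteq> z \<and> y \<noteq> z \<and> {x,y} \<in> E \<and> {x,z} \<in> E"
proof -
  obtain e1 e2 where e: "e1 \<in> E" "e2 \<in> E" "e1 \<noteq> e2" "e1 \<inter> e2 \<noteq> {}" using nm unfolding mt_def by blast
  then obtain x where x: "x \<in> e1" "x \<in> e2" by blast
  have "e1 \<in> vpairs n" using E e(1) by (rule subsetD)
  then obtain a1 b1 where 1: "a1 < n" "b1 < n" "a1 \<noteq> b1" "e1 = {a1,b1}" by (rule vpairsE)
  have "e2 \<in> vpairs n" using E e(2) by (rule subsetD)
  then obtain a2 b2 where 2: "a2 < n" "b2 < n" "a2 \<noteq> b2" "e2 = {a2,b2}" by (rule vpairsE)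
  obtain y where y: "y \<noteq> x" "e1 = {x,y}" "y < n" using 1 x(1) by (metis insert_commute insertE singletonD)
  obtain z where z: "z \<noteq> x" "e2 = {x,z}" "z < n" using 2 x(2) by (metis insert_commute insertE singletonD)
  have yz: "y \<noteq> z" using y z e(3) by blast
  have xn: "x < n" using 1 x(1) by blast
  show ?thesis using xn y z yz e by metis
qed

lemma bad_bound:
  fixes q :: real
  assumes q: "0 \<le> q" "q \<le> 1"
  shows "gnp_prob n q (\<lambda>E. \<not> mt E) \<le> real n ^ 3 * q ^ 2"
proof -
  define V where "V = vpairs n"
  define w where "w = (\<lambda>E::nat set set. q ^ card E * (1 - q) ^ (card V - card E))"
  define T where "T = {(x,y,z). x < n \<and> y < n \<and> z < n \<and> x \<noteq> y \<and> x \<noteq> z \<and> y \<noteq> z}"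
  define A where "A = (\<lambda>(x::nat,y::nat,z::nat). {{x,y},{x,z}})"
  have wn: "\<And>E. 0 \<le> w E" unfolding w_def using q by simp
  have finV: "finite (Pow V)" unfolding V_def using finite_vpairs by simp
  have Tsub: "T \<subseteq> {..<n} \<times> {..<n} \<times> {..<n}" unfolding T_def by auto
  have finT: "finite T" using Tsub finite_subset by blast
  have cT: "card T \<le> n ^ 3"
  proof -
    have "card T \<le> card ({..<n} \<times> {..<n} \<times> {..<n})" using Tsub by (intro card_mono) auto
    thus ?thesis by (simp add: card_cartesian_product power3_eq_cube)
  qed
  have AT: "\<And>t. t \<in> T \<Longrightarrow> A t \<subseteq> V \<and> card (A t) = 2"
  proof -
    fix t assume "t \<in> T"
    then obtain x y z where t: "t = (x,y,z)" "x < n" "y < n" "z < n" "x \<noteq> y" "x \<noteq> z" "y \<noteq> z"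
      unfolding T_def by auto
    have "{x,y} \<noteq> {x,z}" using t by (auto simp: doubleton_eq_iff)
    moreover have "{x,y} \<in> V" "{x,z} \<in> V" unfolding V_def vpairs_def using t by blast+
    ultimately show "A t \<subseteq> V \<and> card (A t) = 2" unfolding A_def t by simp
  qed
  define B where "B = {E. E \<subseteq> V \<and> \<not> mt E}"
  have "gnp_prob n q (\<lambda>E. \<not> mt E) = (\<Sum>E\<in>B. w E)" unfolding gnp_prob_def B_def w_def V_def by simp
  also have "\<dots> \<le> (\<Sum>E\<in>B. \<Sum>t\<in>T. if A t \<subseteq> E then w E else 0)"
  proof (rule sum_mono)
    fix E assume "E \<in> B"
    hence "E \<subseteq> vpairs n" "\<not> mt E" unfolding B_def V_def by auto
    then obtain x y z where xyz: "x < n \<and> y < n \<and> z < n \<and> x \<noteq> y \<and> x \<noteq> z \<and> y \<noteq> z \<and> {x,y} \<in> E \<and> {x,z} \<in> E"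
      using not_mt_witness by blast
    hence tT: "(x,y,z) \<in> T" and tA: "A (x,y,z) \<subseteq> E" unfolding T_def A_def by auto
    have "w E = (if A (x,y,z) \<subseteq> E then w E else 0)" using tA by simp
    also have "\<dots> \<le> (\<Sum>t\<in>T. if A t \<subseteq> E then w E else 0)"
      by (rule member_le_sum[OF tT]) (use wn finT in auto)
    finally show "w E \<le> (\<Sum>t\<in>T. if A t \<subseteq> E then w E else 0)" .
  qed
  also have "\<dots> \<le> (\<Sum>E\<in>Pow V. \<Sum>t\<in>T. if A t \<subseteq> E then w E else 0)"
    by (rule sum_mono2[OF finV]) (auto simp: B_def wn intro: sum_nonneg)
  also have "\<dots> = (\<Sum>t\<in>T. \<Sum>E\<in>Pow V. if A t \<subseteq> E then w E else 0)"
    by (rule sum.swap)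
  also have "\<dots> = (\<Sum>t\<in>T. q ^ 2)"
  proof (rule sum.cong)
    fix t assume t: "t \<in> T"
    have "(\<Sum>E\<in>Pow V. if A t \<subseteq> E then w E else 0) = (\<Sum>E\<in>{E \<in> Pow V. A t \<subseteq> E}. w E)"
      by (rule sum.inter_filter[symmetric, OF finV])
    also have "{E \<in> Pow V. A t \<subseteq> E} = {E. E \<subseteq> V \<and> A t \<subseteq> E}" by auto
    also have "(\<Sum>E\<in>{E. E \<subseteq> V \<and> A t \<subseteq> E}. w E) = q ^ card (A t)"
      unfolding w_def by (rule sup_pow) (use AT[OF t] finite_vpairs V_def in auto)
    finally show "(\<Sum>E\<in>Pow V. if A t \<subseteq> E then w E else 0) = q ^ 2" using AT[OF t] by simp
  qed simp
  also have "\<dots> = real (card T) * q ^ 2" by simp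
  also have "\<dots> \<le> real n ^ 3 * q ^ 2"
  proof (rule mult_right_mono)
    show "real (card T) \<le> real n ^ 3" using cT by (metis of_nat_le_iff of_nat_power)
  qed simp
  finally show ?thesis .
qed

lemma recon_prob:
  fixes q :: real
  assumes q: "0 \<le> q" "q \<le> 1"
  shows "1 - real n ^ 3 * q ^ 2 \<le> gnp_prob n q (reconstructible_1 n)"
    and "gnp_prob n q (reconstructible_1 n) \<le> 1"
proof -
  have s: "gnp_prob n q (reconstructible_1 n) + gnp_prob n q (\<lambda>E. \<not> reconstructible_1 n E) = 1"
    by (rule gnp_split)
  have "gnp_prob n q (\<lambda>E. \<not> reconstructible_1 n E) \<le> gnp_prob n q (\<lambda>E. \<not> mt E)"
    by (rule gnp_mono[OF q]) (use recon in blast)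
  also have "\<dots> \<le> real n ^ 3 * q ^ 2" by (rule bad_bound[OF q])
  finally show "1 - real n ^ 3 * q ^ 2 \<le> gnp_prob n q (reconstructible_1 n)" using s by linarith
  show "gnp_prob n q (reconstructible_1 n) \<le> 1" using s gnp_nonneg[OF q, of n "\<lambda>E. \<not> reconstructible_1 n E"] by linarith
qed


lemma lim0:
  fixes p :: "nat \<Rightarrow> real"
  assumes "p \<in> o(\<lambda>n. real n powr (-3/2))"
  shows "(\<lambda>n. real n ^ 3 * p n ^ 2) \<longlonglongrightarrow> 0"
proof -
  have r: "(\<lambda>n. p n / real n powr (-3/2)) \<longlonglongrightarrow> 0" using smalloD_tendsto[OF assms] .
  have r2: "(\<lambda>n. (p n / real n powr (-3/2)) ^ 2) \<longlonglongrightarrow> 0" using tendsto_power[OF r, of 2] by simp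
  have ev: "\<forall>\<^sub>F n in sequentially. (p n / real n powr (-3/2)) ^ 2 = real n ^ 3 * p n ^ 2"
  proof (rule eventually_sequentiallyI[of 1])
    fix n :: nat assume n: "1 \<le> n"
    hence pos: "0 < real n" by simp
    have "(real n powr (-3/2)) ^ 2 = real n powr (of_nat 2 * (-3/2))"
      by (rule powr_power) (use pos in simp)
    also have "(of_nat 2 * (-3/2) :: real) = - 3" by simp
    also have "real n powr (- 3) = inverse (real n powr 3)" by (rule powr_minus)
    also have "real n powr 3 = real n ^ 3" using pos by simp
    finally have e: "(real n powr (-3/2)) ^ 2 = inverse (real n ^ 3)" .
    show "(p n / real n powr (-3/2)) ^ 2 = real n ^ 3 * p n ^ 2"
      unfolding power_divide e using pos by (simp add: divide_inverse)
  qed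
  show ?thesis using Lim_transform_eventually[OF r2 ev] .
qed


theorem theorem1p7:
  fixes p :: "nat \<Rightarrow> real"
  assumes "\<And>n. 0 \<le> p n" and "\<And>n. p n \<le> 1"
    and "p \<in> o(\<lambda>n. real n powr (-3/2))"
  shows "(\<lambda>n. gnp_prob n (p n) (reconstructible_1 n)) \<longlonglongrightarrow> 1"
proof (rule tendsto_sandwich)
  show "\<forall>\<^sub>F n in sequentially. 1 - real n ^ 3 * p n ^ 2 \<le> gnp_prob n (p n) (reconstructible_1 n)"
    using recon_prob(1)[OF assms(1,2)] by simp
  show "\<forall>\<^sub>F n in sequentially. gnp_prob n (p n) (reconstructible_1 n) \<le> 1"
    using recon_prob(2)[OF assms(1,2)] by simp
  show "(\<lambda>n. 1 - real n ^ 3 * p n ^ 2) \<longlonglongrightarrow> 1"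
    using tendsto_diff[OF tendsto_const lim0[OF assms(3)], of 1] by simp
  show "(\<lambda>n. 1::real) \<longlonglongrightarrow> 1" by simp
qed

end
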